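(* Let $\mathcal{X}$ be a countable set and $\pi$ a probability distribution on $\mathcal{X}$. Let $\mathcal{X}_1,\dots,\mathcal{X}_n\subset\mathcal{X}$ with $\bigcup_{i=1}^n\mathcal{X}_i=\mathcal{X}$, and for each $i$ let $Q_i$ be a Markov kernel defined on $\mathcal{X}_i$. Let $S_1,\dots,S_n:\mathcal{X}\to\mathcal{X}$ be $\pi$-invariant involutions, and let $\omega=(\omega_1,\dots,\omega_n):\mathcal{X}\to\Delta^{n-1}$ (the standard simplex $\{y\in\mathbb{R}^n:y_i\ge0,\sum_i y_i=1\}$) satisfy: (C1) $\omega_i(x)>0$ if and only if $x\in\mathcal{X}_i$, for $i=1,\dots,n$; (C2) $\omega_i(x)>0$ and $Q_i(x,x')>0$ if and only if $\omega_i(x')>0$ and $Q_i(S_i(x'),S_i(x))>0$; (C3) $\omega_i(S_i(x))=\omega_i(x)$ for all $x$ and all $i$. Then the Mixed Skew Metropolis–Hastings Markov chain (defined in the context) has $\pi$ as an invariant measure.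
   Context: The Mixed Skew Metropolis–Hastings (MSMH) chain is defined by the following transition from a current state $x$: sample an index $i$ with probability $\omega_i(x)$; sample a proposal $x'\sim Q_i(x,\cdot)$; compute $$r_i(x,x')=\frac{\pi(x')\,\omega_i(S_i(x'))\,Q_i(S_i(x'),S_i(x))}{\pi(x)\,\omega_i(x)\,Q_i(x,x')};$$ sample $u$ uniformly on $[0,1]$; if $u<r_i(x,x')$ the next state is $x'$, otherwise the next state is $S_i(x)$. A $\pi$-invariant involution is a map $S$ with $S\circ S=\mathrm{id}$ and $\pi(S(A))=\pi(A)$ for all $A\subset\mathcal{X}$. *)

theory Defs
  imports "HOL-Probability.Probability"
begin

text \<open>Indices run over {..<n}
  (i.e. 0,...,n-1 instead of 1,...,n). \<omega> i x is the i-th mixing weight at x,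
  Q i x is the proposal distribution of the i-th kernel at x (only relevant
  for x in X_i), S i is the i-th involution.\<close>

definition msmh_ratio ::
  "'a pmf \<Rightarrow> (nat \<Rightarrow> 'a \<Rightarrow> real) \<Rightarrow> (nat \<Rightarrow> 'a \<Rightarrow> 'a pmf) \<Rightarrow> (nat \<Rightarrow> 'a \<Rightarrow> 'a)
     \<Rightarrow> nat \<Rightarrow> 'a \<Rightarrow> 'a \<Rightarrow> real" where
  "msmh_ratio \<pi> \<omega> Q S i x x' =
     (pmf \<pi> x' * \<omega> i (S i x') * pmf (Q i (S i x')) (S i x)) /
     (pmf \<pi> x * \<omega> i x * pmf (Q i x) x')"

definition index_pmf :: "nat \<Rightarrow> (nat \<Rightarrow> 'a \<Rightarrow> real) \<Rightarrow> 'a \<Rightarrow> nat pmf" where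
  "index_pmf n \<omega> x = embed_pmf (\<lambda>i. if i < n then \<omega> i x else 0)"

text \<open>One MSMH transition from x.  Accepting iff u < r with u uniform on [0,1]
  happens with probability min 1 r (r \<ge> 0); bernoulli_pmf clamps to [0,1].\<close>
definition msmh_step ::
  "nat \<Rightarrow> 'a pmf \<Rightarrow> (nat \<Rightarrow> 'a \<Rightarrow> real) \<Rightarrow> (nat \<Rightarrow> 'a \<Rightarrow> 'a pmf) \<Rightarrow> (nat \<Rightarrow> 'a \<Rightarrow> 'a)
     \<Rightarrow> 'a \<Rightarrow> 'a pmf" where
  "msmh_step n \<pi> \<omega> Q S x =
     bind_pmf (index_pmf n \<omega> x) (\<lambda>i.
     bind_pmf (Q i x) (\<lambda>x'.
     bind_pmf (bernoulli_pmf (msmh_ratio \<pi> \<omega> Q S i x x')) (\<lambda>acc.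
     return_pmf (if acc then x' else S i x))))"

definition pi_invariant_involution :: "'a pmf \<Rightarrow> ('a \<Rightarrow> 'a) \<Rightarrow> bool" where
  "pi_invariant_involution \<pi> S \<longleftrightarrow>
     S \<circ> S = id \<and> (\<forall>A. measure_pmf.prob \<pi> (S ` A) = measure_pmf.prob \<pi> A)"

end

theory Submission imports Defs begin
context begin
interpretation pmf_as_function .
lemma bern_True: "pmf (bernoulli_pmf p) True = min 1 (max 0 p)"
  by transfer simp
lemma bern_False: "pmf (bernoulli_pmf p) False = 1 - min 1 (max 0 p)"
  by transfer simp
end

lemma bern_clamp: "bernoulli_pmf p = bernoulli_pmf (min 1 (max 0 p))"
  by (rule pmf_eqI) (case_tac i; simp add: bern_True bern_False)

lemma bern_bind:
  "pmf (bind_pmf (bernoulli_pmf p) (\<lambda>acc. return_pmf (if acc then a else b))) y =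
   min 1 (max 0 p) * indicator {y} a + (1 - min 1 (max 0 p)) * indicator {y} b"
  apply (subst bern_clamp)
  apply (subst pmf_bind)
  apply (subst integral_bernoulli_pmf)
  apply auto
  done

lemma skew_min:
  fixes a b :: real
  assumes "a \<ge> 0" "b \<ge> 0"
  shows "a * min 1 (b / a) = b * min 1 (a / b)"
proof (cases "a = 0 \<or> b = 0")
  case True then show ?thesis by auto
next
  case False
  then have "a > 0" "b > 0" using assms by auto
  then show ?thesis
    by (cases "a \<le> b") (auto simp: min_def field_simps)
qed

lemma index_pmf_pmf:
  assumes nn: "\<And>i. i < n \<Longrightarrow> \<omega> i x \<ge> 0" and s: "(\<Sum>i<n. \<omega> i x) = 1"
  shows "pmf (index_pmf n \<omega> x) i = (if i < n then \<omega> i x else 0)"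
    and "set_pmf (index_pmf n \<omega> x) \<subseteq> {..<n}"
proof -
  let ?f = "\<lambda>i. if i < n then \<omega> i x else 0"
  have nn': "\<And>i. 0 \<le> ?f i" using nn by auto
  have "(\<integral>\<^sup>+i. ennreal (?f i) \<partial>count_space UNIV) = (\<integral>\<^sup>+i. ennreal (?f i) * indicator {..<n} i \<partial>count_space UNIV)"
    by (intro nn_integral_cong) (auto split: split_indicator)
  also have "\<dots> = (\<integral>\<^sup>+i. ennreal (?f i) \<partial>count_space {..<n})"
    by (simp add: nn_integral_count_space_indicator)
  also have "\<dots> = (\<Sum>i<n. ennreal (?f i))"
    by (simp add: nn_integral_count_space_finite)
  also have "\<dots> = ennreal (\<Sum>i<n. ?f i)"
    by (rule sum_ennreal) (use nn in auto)
  also have "\<dots> = 1" using s by simp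
  finally have p: "(\<integral>\<^sup>+i. ennreal (?f i) \<partial>count_space UNIV) = 1" .
  show "pmf (index_pmf n \<omega> x) i = (if i < n then \<omega> i x else 0)"
    unfolding index_pmf_def by (rule pmf_embed_pmf[OF nn' p])
  show "set_pmf (index_pmf n \<omega> x) \<subseteq> {..<n}"
    unfolding index_pmf_def by (subst set_embed_pmf[OF nn' p]) auto
qed

lemma per_i:
  fixes \<pi> :: "'a::countable pmf" and w :: "'a \<Rightarrow> real" and q :: "'a \<Rightarrow> 'a pmf" and T :: "'a \<Rightarrow> 'a"
  assumes TT: "\<And>x. T (T x) = x" and PT: "\<And>x. pmf \<pi> (T x) = pmf \<pi> x"
    and wT: "\<And>x. w (T x) = w x" and wnn: "\<And>x. w x \<ge> 0"
    and \<alpha>_def: "\<And>x z. \<alpha> x z = min 1 ((pmf \<pi> z * w (T z) * pmf (q (T z)) (T x)) / (pmf \<pi> x * w x * pmf (q x) z))"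
  shows "(\<integral>\<^sup>+x. ennreal (w x) * (\<integral>\<^sup>+z. ennreal (\<alpha> x z * indicator {y} z + (1 - \<alpha> x z) * indicator {y} (T x)) \<partial>q x) \<partial>\<pi>)
         = ennreal (pmf \<pi> y * w y)"
proof -
  have a0: "0 \<le> \<alpha> x z" for x z unfolding \<alpha>_def by (auto intro!: divide_nonneg_nonneg mult_nonneg_nonneg wnn)
  have a1: "\<alpha> x z \<le> 1" for x z unfolding \<alpha>_def by auto
  define C where "C x = (\<integral>\<^sup>+z. ennreal (1 - \<alpha> x z) \<partial>q x)" for x
  have inner: "(\<integral>\<^sup>+z. ennreal (\<alpha> x z * indicator {y} z + (1 - \<alpha> x z) * indicator {y} (T x)) \<partial>q x)
      = ennreal (\<alpha> x y * pmf (q x) y) + indicator {T y} x * C x" for x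
  proof -
    have "(\<integral>\<^sup>+z. ennreal (\<alpha> x z * indicator {y} z + (1 - \<alpha> x z) * indicator {y} (T x)) \<partial>q x)
        = (\<integral>\<^sup>+z. ennreal (\<alpha> x z) * indicator {y} z + indicator {T y} x * ennreal (1 - \<alpha> x z) \<partial>q x)"
      using a0 a1 TT by (intro nn_integral_cong) (auto split: split_indicator)
    also have "\<dots> = (\<integral>\<^sup>+z. ennreal (\<alpha> x z) * indicator {y} z \<partial>q x) + (\<integral>\<^sup>+z. indicator {T y} x * ennreal (1 - \<alpha> x z) \<partial>q x)"
      by (rule nn_integral_add) auto
    also have "\<dots> = ennreal (\<alpha> x y * pmf (q x) y) + indicator {T y} x * C x"
      unfolding C_def using a0
      by (simp add: nn_integral_cmult emeasure_pmf_single ennreal_mult)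
    finally show ?thesis .
  qed
  have bijT: "bij T" using TT by (metis bij_betw_def inj_def surj_def)
  have skew: "pmf \<pi> x * (w x * (\<alpha> x y * pmf (q x) y)) = pmf \<pi> y * w y * (pmf (q (T y)) (T x) * \<alpha> (T y) (T x))" for x
  proof -
    define a where "a = pmf \<pi> x * w x * pmf (q x) y"
    define b where "b = pmf \<pi> y * w y * pmf (q (T y)) (T x)"
    have "a \<ge> 0" "b \<ge> 0" unfolding a_def b_def using wnn by auto
    have "\<alpha> x y = min 1 (b / a)" unfolding \<alpha>_def a_def b_def wT by simp
    moreover have "\<alpha> (T y) (T x) = min 1 (a / b)" unfolding \<alpha>_def a_def b_def TT PT wT by simp
    ultimately show ?thesis using skew_min[OF \<open>a \<ge> 0\<close> \<open>b \<ge> 0\<close>] unfolding a_def b_def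
      by (simp add: algebra_simps)
  qed
  have first: "(\<integral>\<^sup>+x. ennreal (w x) * ennreal (\<alpha> x y * pmf (q x) y) \<partial>\<pi>)
      = ennreal (pmf \<pi> y * w y) * (\<integral>\<^sup>+z. ennreal (\<alpha> (T y) z) \<partial>q (T y))"
  proof -
    have "(\<integral>\<^sup>+x. ennreal (w x) * ennreal (\<alpha> x y * pmf (q x) y) \<partial>\<pi>)
        = (\<integral>\<^sup>+x. ennreal (pmf \<pi> x) * (ennreal (w x) * ennreal (\<alpha> x y * pmf (q x) y)) \<partial>count_space UNIV)"
      by (rule nn_integral_measure_pmf)
    also have "\<dots> = (\<integral>\<^sup>+x. ennreal (pmf \<pi> y * w y) * ennreal (pmf (q (T y)) (T x) * \<alpha> (T y) (T x)) \<partial>count_space UNIV)"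
    proof (intro nn_integral_cong)
      fix x
      have "ennreal (pmf \<pi> x) * (ennreal (w x) * ennreal (\<alpha> x y * pmf (q x) y))
          = ennreal (pmf \<pi> x * (w x * (\<alpha> x y * pmf (q x) y)))"
        using a0 wnn by (simp add: ennreal_mult)
      also have "\<dots> = ennreal (pmf \<pi> y * w y * (pmf (q (T y)) (T x) * \<alpha> (T y) (T x)))"
        by (simp add: skew)
      also have "\<dots> = ennreal (pmf \<pi> y * w y) * ennreal (pmf (q (T y)) (T x) * \<alpha> (T y) (T x))"
        using a0 wnn by (simp add: ennreal_mult)
      finally show "ennreal (pmf \<pi> x) * (ennreal (w x) * ennreal (\<alpha> x y * pmf (q x) y))
          = ennreal (pmf \<pi> y * w y) * ennreal (pmf (q (T y)) (T x) * \<alpha> (T y) (T x))" .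
    qed
    also have "\<dots> = (\<integral>\<^sup>+z. ennreal (pmf \<pi> y * w y) * ennreal (pmf (q (T y)) z * \<alpha> (T y) z) \<partial>count_space UNIV)"
      by (rule nn_integral_bij_count_space[OF bijT, where f = "\<lambda>z. ennreal (pmf \<pi> y * w y) * ennreal (pmf (q (T y)) z * \<alpha> (T y) z)"])
    also have "\<dots> = ennreal (pmf \<pi> y * w y) * (\<integral>\<^sup>+z. ennreal (pmf (q (T y)) z) * ennreal (\<alpha> (T y) z) \<partial>count_space UNIV)"
      using a0 by (simp add: nn_integral_cmult ennreal_mult)
    also have "\<dots> = ennreal (pmf \<pi> y * w y) * (\<integral>\<^sup>+z. ennreal (\<alpha> (T y) z) \<partial>q (T y))"
      by (simp add: nn_integral_measure_pmf)
    finally show ?thesis .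
  qed
  have second: "(\<integral>\<^sup>+x. ennreal (w x) * (indicator {T y} x * C x) \<partial>\<pi>) = ennreal (pmf \<pi> y * w y) * C (T y)"
  proof -
    have "(\<integral>\<^sup>+x. ennreal (w x) * (indicator {T y} x * C x) \<partial>\<pi>) = (\<integral>\<^sup>+x. (ennreal (w x) * C x) * indicator {T y} x \<partial>\<pi>)"
      by (intro nn_integral_cong) (simp add: mult_ac)
    also have "\<dots> = ennreal (w (T y)) * C (T y) * ennreal (pmf \<pi> (T y))"
      by (simp add: emeasure_pmf_single)
    also have "\<dots> = ennreal (pmf \<pi> y * w y) * C (T y)"
      using wnn by (simp add: PT wT ennreal_mult mult_ac)
    finally show ?thesis .
  qed
  have total: "(\<integral>\<^sup>+z. ennreal (\<alpha> (T y) z) \<partial>q (T y)) + C (T y) = 1"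
  proof -
    have "(\<integral>\<^sup>+z. ennreal (\<alpha> (T y) z) \<partial>q (T y)) + C (T y) = (\<integral>\<^sup>+z. ennreal (\<alpha> (T y) z) + ennreal (1 - \<alpha> (T y) z) \<partial>q (T y))"
      unfolding C_def by (rule nn_integral_add[symmetric]) auto
    also have "\<dots> = (\<integral>\<^sup>+z. 1 \<partial>q (T y))"
      using a0 a1 by (intro nn_integral_cong) (simp add: ennreal_plus[symmetric] del: ennreal_plus)
    also have "\<dots> = 1" by (simp add: measure_pmf.emeasure_space_1)
    finally show ?thesis .
  qed
  have "(\<integral>\<^sup>+x. ennreal (w x) * (\<integral>\<^sup>+z. ennreal (\<alpha> x z * indicator {y} z + (1 - \<alpha> x z) * indicator {y} (T x)) \<partial>q x) \<partial>\<pi>)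
      = (\<integral>\<^sup>+x. ennreal (w x) * ennreal (\<alpha> x y * pmf (q x) y) + ennreal (w x) * (indicator {T y} x * C x) \<partial>\<pi>)"
    by (intro nn_integral_cong) (simp add: inner distrib_left)
  also have "\<dots> = (\<integral>\<^sup>+x. ennreal (w x) * ennreal (\<alpha> x y * pmf (q x) y) \<partial>\<pi>) + (\<integral>\<^sup>+x. ennreal (w x) * (indicator {T y} x * C x) \<partial>\<pi>)"
    by (rule nn_integral_add) auto
  also have "\<dots> = ennreal (pmf \<pi> y * w y) * ((\<integral>\<^sup>+z. ennreal (\<alpha> (T y) z) \<partial>q (T y)) + C (T y))"
    unfolding first second by (simp add: distrib_left)
  also have "\<dots> = ennreal (pmf \<pi> y * w y)" by (simp add: total)
  finally show ?thesis .
qed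

theorem theorem4p2:
  fixes \<pi> :: "'a::countable pmf"
    and n :: nat
    and Xs :: "nat \<Rightarrow> 'a set"
    and Q :: "nat \<Rightarrow> 'a \<Rightarrow> 'a pmf"
    and S :: "nat \<Rightarrow> 'a \<Rightarrow> 'a"
    and \<omega> :: "nat \<Rightarrow> 'a \<Rightarrow> real"
  assumes cover: "(\<Union>i<n. Xs i) = UNIV"
    and invol: "\<And>i. i < n \<Longrightarrow> pi_invariant_involution \<pi> (S i)"
    and simplex_nonneg: "\<And>i x. i < n \<Longrightarrow> \<omega> i x \<ge> 0"
    and simplex_sum: "\<And>x. (\<Sum>i<n. \<omega> i x) = 1"
    and C1: "\<And>i x. i < n \<Longrightarrow> (\<omega> i x > 0 \<longleftrightarrow> x \<in> Xs i)"
    and C2: "\<And>i x x'. i < n \<Longrightarrow>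
               (\<omega> i x > 0 \<and> pmf (Q i x) x' > 0) \<longleftrightarrow>
               (\<omega> i x' > 0 \<and> pmf (Q i (S i x')) (S i x) > 0)"
    and C3: "\<And>i x. i < n \<Longrightarrow> \<omega> i (S i x) = \<omega> i x"
  shows "bind_pmf \<pi> (msmh_step n \<pi> \<omega> Q S) = \<pi>"
proof (rule pmf_eqI)
  fix y
  define \<alpha> where "\<alpha> i x z = min 1 ((pmf \<pi> z * \<omega> i (S i z) * pmf (Q i (S i z)) (S i x)) / (pmf \<pi> x * \<omega> i x * pmf (Q i x) z))" for i x z
  define I where "I i x = (\<integral>\<^sup>+z. ennreal (\<alpha> i x z * indicator {y} z + (1 - \<alpha> i x z) * indicator {y} (S i x)) \<partial>Q i x)" for i x
  have r_nn: "0 \<le> msmh_ratio \<pi> \<omega> Q S i x z" if "i < n" for i x z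
    unfolding msmh_ratio_def using simplex_nonneg[OF that]
    by (auto intro!: divide_nonneg_nonneg mult_nonneg_nonneg)
  have step: "ennreal (pmf (msmh_step n \<pi> \<omega> Q S x) y) = (\<Sum>i<n. ennreal (\<omega> i x) * I i x)" for x
  proof -
    have sub: "set_pmf (index_pmf n \<omega> x) \<subseteq> {..<n}"
      by (rule index_pmf_pmf(2)) (auto simp: simplex_nonneg simplex_sum)
    have "ennreal (pmf (msmh_step n \<pi> \<omega> Q S x) y) =
      (\<integral>\<^sup>+i. (\<integral>\<^sup>+z. ennreal (pmf (bind_pmf (bernoulli_pmf (msmh_ratio \<pi> \<omega> Q S i x z)) (\<lambda>acc.
         return_pmf (if acc then z else S i x))) y) \<partial>Q i x) \<partial>index_pmf n \<omega> x)"
      unfolding msmh_step_def by (simp add: ennreal_pmf_bind)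
    also have "\<dots> = (\<Sum>i<n. (\<integral>\<^sup>+z. ennreal (pmf (bind_pmf (bernoulli_pmf (msmh_ratio \<pi> \<omega> Q S i x z)) (\<lambda>acc.
         return_pmf (if acc then z else S i x))) y) \<partial>Q i x) * ennreal (pmf (index_pmf n \<omega> x) i))"
      by (rule nn_integral_measure_pmf_support) (use sub in auto)
    also have "\<dots> = (\<Sum>i<n. ennreal (\<omega> i x) * I i x)"
    proof (rule sum.cong[OF refl])
      fix i assume "i \<in> {..<n}"
      then have i: "i < n" by simp
      have "(\<integral>\<^sup>+z. ennreal (pmf (bind_pmf (bernoulli_pmf (msmh_ratio \<pi> \<omega> Q S i x z)) (\<lambda>acc.
         return_pmf (if acc then z else S i x))) y) \<partial>Q i x) = I i x"
        unfolding I_def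
      proof (intro nn_integral_cong)
        fix z
        have "max 0 (msmh_ratio \<pi> \<omega> Q S i x z) = msmh_ratio \<pi> \<omega> Q S i x z" using r_nn[OF i] by simp
        then show "ennreal (pmf (bind_pmf (bernoulli_pmf (msmh_ratio \<pi> \<omega> Q S i x z)) (\<lambda>acc.
         return_pmf (if acc then z else S i x))) y) = ennreal (\<alpha> i x z * indicator {y} z + (1 - \<alpha> i x z) * indicator {y} (S i x))"
          by (simp only: bern_bind) (simp add: \<alpha>_def msmh_ratio_def)
      qed
      then show "(\<integral>\<^sup>+z. ennreal (pmf (bind_pmf (bernoulli_pmf (msmh_ratio \<pi> \<omega> Q S i x z)) (\<lambda>acc.
         return_pmf (if acc then z else S i x))) y) \<partial>Q i x) * ennreal (pmf (index_pmf n \<omega> x) i)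
         = ennreal (\<omega> i x) * I i x"
        using index_pmf_pmf(1)[of n \<omega> x i] by (simp add: simplex_nonneg simplex_sum i mult.commute)
    qed
    finally show ?thesis .
  qed
  have per: "(\<integral>\<^sup>+x. ennreal (\<omega> i x) * I i x \<partial>\<pi>) = ennreal (pmf \<pi> y * \<omega> i y)" if i: "i < n" for i
  proof -
    have inv: "S i \<circ> S i = id" "\<And>A. measure_pmf.prob \<pi> (S i ` A) = measure_pmf.prob \<pi> A"
      using invol[OF i] unfolding pi_invariant_involution_def by auto
    have TT: "S i (S i x) = x" for x using inv(1) by (metis comp_apply id_apply)
    have PT: "pmf \<pi> (S i x) = pmf \<pi> x" for x
      using inv(2)[of "{x}"] by (simp add: measure_pmf_single)
    show ?thesis unfolding I_def
      by (rule per_i[where \<alpha> = "\<alpha> i"]) (use TT PT C3[OF i] simplex_nonneg[OF i] in \<open>auto simp: \<alpha>_def\<close>)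
  qed
  have "ennreal (pmf (bind_pmf \<pi> (msmh_step n \<pi> \<omega> Q S)) y) = (\<integral>\<^sup>+x. (\<Sum>i<n. ennreal (\<omega> i x) * I i x) \<partial>\<pi>)"
    by (simp add: ennreal_pmf_bind step)
  also have "\<dots> = (\<Sum>i<n. (\<integral>\<^sup>+x. ennreal (\<omega> i x) * I i x \<partial>\<pi>))"
    by (rule nn_integral_sum) auto
  also have "\<dots> = (\<Sum>i<n. ennreal (pmf \<pi> y * \<omega> i y))"
    by (rule sum.cong) (auto simp: per)
  also have "\<dots> = ennreal (\<Sum>i<n. pmf \<pi> y * \<omega> i y)"
    by (rule sum_ennreal) (use simplex_nonneg in auto)
  also have "\<dots> = ennreal (pmf \<pi> y)"
    by (simp add: sum_distrib_left[symmetric] simplex_sum)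
  finally show "pmf (bind_pmf \<pi> (msmh_step n \<pi> \<omega> Q S)) y = pmf \<pi> y"
    by simp
qed
end
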